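(* Let $\Omega$ be a bounded measurable set in $\mathbb{R}^d$, let $\mu$ be a positive, locally finite Borel measure on $\mathbb{R}^d$, and let $\Sigma\subset\mathbb{R}^d$ be measurable. Suppose $\mathbf{1}_\Omega\ast\mu=0$ a.e. on $\Sigma^c=\mathbb{R}^d\setminus\Sigma$. Then $m((\Omega+t)\cap\Sigma^c)=0$ for every $t\in\operatorname{supp}(\mu)$.
   Context: $m$ is Lebesgue measure, $\operatorname{supp}(\mu)$ the closed support of $\mu$. *)

theory Defs
  imports "HOL-Analysis.Analysis"
begin

definition locally_finite_measure :: "'a::topological_space measure \<Rightarrow> bool" where
  "locally_finite_measure M \<longleftrightarrow>
     (\<forall>x. \<exists>U. open U \<and> x \<in> U \<and> emeasure M U < \<infinity>)"

definition measure_support :: "'a::topological_space measure \<Rightarrow> 'a set" where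
  "measure_support M = {x. \<forall>U. open U \<longrightarrow> x \<in> U \<longrightarrow> emeasure M U > 0}"

definition conv_indicator_measure :: "'a::euclidean_space set \<Rightarrow> 'a measure \<Rightarrow> 'a \<Rightarrow> ennreal" where
  "conv_indicator_measure A M x = (\<integral>\<^sup>+ y. indicator A (x - y) \<partial>M)"

end

theory Submission imports Defs
begin

lemma lf_sigma_finite:
  fixes \<mu> :: "'a::euclidean_space measure"
  assumes "sets \<mu> = sets borel" "locally_finite_measure \<mu>"
  shows "sigma_finite_measure \<mu>"
proof
  have "\<forall>x. \<exists>U. open U \<and> x \<in> U \<and> emeasure \<mu> U < \<infinity>"
    using assms(2) unfolding locally_finite_measure_def by blast
  then obtain U where U: "\<And>x. open (U x) \<and> x \<in> U x \<and> emeasure \<mu> (U x) < \<infinity>" by metis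
  obtain F where F: "F \<subseteq> range U" "countable F" "\<Union>F = \<Union>(range U)"
    using Lindelof[of "range U"] U by blast
  have sp: "space \<mu> = UNIV" using assms(1) by (metis sets_eq_imp_space_eq space_borel)
  show "\<exists>A::'a set set. countable A \<and> A \<subseteq> sets \<mu> \<and> (\<Union>A) = space \<mu> \<and> (\<forall>a\<in>A. emeasure \<mu> a \<noteq> \<infinity>)"
  proof (intro exI conjI)
    show "countable F" by fact
    show "F \<subseteq> sets \<mu>" using F(1) U assms(1) by auto
    show "\<Union>F = space \<mu>" using F(3) U sp by auto
    show "\<forall>a\<in>F. emeasure \<mu> a \<noteq> \<infinity>"
    proof
      fix a assume "a \<in> F"
      then obtain x where "a = U x" using F(1) by blast
      then show "emeasure \<mu> a \<noteq> \<infinity>" using U[of x] by auto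
    qed
  qed
qed

lemma steinhaus:
  fixes A :: "'a::euclidean_space set"
  assumes A: "A \<in> sets lebesgue" "bounded A" "emeasure lebesgue A > 0"
  shows "\<exists>d>0. \<forall>h. norm h < d \<longrightarrow> emeasure lebesgue (A \<inter> {x. x - h \<in> A}) > 0"
proof -
  have Afin: "A \<in> lmeasurable" using A by (simp add: bounded_set_imp_lmeasurable)
  have eA: "emeasure lebesgue A = ennreal (measure lebesgue A)"
    using Afin by (rule emeasure_eq_measure2)
  have mA: "measure lebesgue A > 0" using A(3) unfolding eA by (rule iffD1[OF ennreal_less_zero_iff])
  obtain T where T: "closed T" "T \<subseteq> A" "A - T \<in> lmeasurable" "emeasure lebesgue (A - T) < ennreal (measure lebesgue A / 2)"
    using sets_lebesgue_inner_closed[OF A(1), of "measure lebesgue A / 2"] mA by auto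
  have cT: "compact T" using T A(2) bounded_subset compact_eq_bounded_closed by blast
  have Tm: "T \<in> lmeasurable" using cT by (simp add: lmeasurable_compact)
  have "measure lebesgue (A - T) < measure lebesgue A / 2"
    using T(3,4) mA by (simp add: emeasure_eq_measure2 ennreal_less_iff)
  moreover have "measure lebesgue A - measure lebesgue T \<le> measure lebesgue (A - T)"
    using Afin Tm by (rule measure_diff_le_measure_setdiff)
  ultimately have mT: "measure lebesgue T > 0" using mA by linarith
  obtain U where U: "open U" "T \<subseteq> U" "U - T \<in> lmeasurable" "emeasure lebesgue (U - T) < ennreal (measure lebesgue T)"
    using sets_lebesgue_outer_open[of T "measure lebesgue T"] Tm mT by auto
  have mUT: "measure lebesgue (U - T) < measure lebesgue T"
    using U(3,4) mT by (simp add: emeasure_eq_measure2 ennreal_less_iff)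
  have Ueq: "U = T \<union> (U - T)" using U(2) by blast
  have Um: "U \<in> lmeasurable" using U(3) Tm Ueq
    by (metis fmeasurable.Un)
  have mU: "measure lebesgue U \<le> measure lebesgue T + measure lebesgue (U - T)"
    using Ueq measure_Un_le[of T lebesgue "U - T"] Tm U(3) by (metis fmeasurableD)
  obtain d where d: "d > 0" "\<forall>x\<in>T. \<forall>y\<in>-U. d \<le> dist x y"
    using separate_compact_closed[OF cT, of "-U"] U by auto
  show ?thesis
  proof (intro exI conjI allI impI)
    show "d > 0" by fact
    fix h :: 'a assume h: "norm h < d"
    define Th where "Th = (\<lambda>x. h + x) ` T"
    have Thm: "Th \<in> lmeasurable" unfolding Th_def using Tm measurable_translation by blast
    have mTh: "measure lebesgue Th = measure lebesgue T" unfolding Th_def by (rule measure_translation)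
    have ThU: "Th \<subseteq> U"
    proof
      fix y assume "y \<in> Th"
      then obtain x where x: "x \<in> T" "y = h + x" unfolding Th_def by auto
      have "dist x y < d" using x h by (simp add: dist_norm)
      then show "y \<in> U" using d x(1) by (meson ComplI linorder_not_less)
    qed
    have "measure lebesgue (T \<union> Th) \<le> measure lebesgue U"
      using ThU U(2) Um Tm Thm by (intro measure_mono_fmeasurable) (auto simp: fmeasurableD)
    moreover have "measure lebesgue (T \<union> Th) = measure lebesgue T + measure lebesgue Th - measure lebesgue (T \<inter> Th)"
      using Tm Thm by (rule measure_Un3)
    ultimately have pos: "measure lebesgue (T \<inter> Th) > 0" using mU mTh mUT by linarith
    have sub: "T \<inter> Th \<subseteq> A \<inter> {x. x - h \<in> A}" using T(2) unfolding Th_def by auto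
    have "A \<inter> {x. x - h \<in> A} \<in> sets lebesgue"
    proof -
      have "{x. x - h \<in> A} = (\<lambda>x. h + x) ` A" by (force simp: algebra_simps)
      moreover have "(\<lambda>x. h + x) ` A \<in> sets lebesgue" using A(1) by (rule lebesgue_sets_translation)
      ultimately show ?thesis using A(1) by auto
    qed
    then have "emeasure lebesgue (T \<inter> Th) \<le> emeasure lebesgue (A \<inter> {x. x - h \<in> A})"
      using sub by (intro emeasure_mono) auto
    moreover have "emeasure lebesgue (T \<inter> Th) > 0"
      using pos Tm Thm by (simp add: emeasure_eq_measure2 fmeasurable.Int)
    ultimately show "emeasure lebesgue (A \<inter> {x. x - h \<in> A}) > 0" by order
  qed
qed


theorem lemma2p5:
  fixes \<Omega> \<Sigma> :: "'a::euclidean_space set" and \<mu> :: "'a measure"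
  assumes "\<Omega> \<in> sets lebesgue" and "bounded \<Omega>"
    and "sets \<mu> = sets borel" and "locally_finite_measure \<mu>"
    and "\<Sigma> \<in> sets lebesgue"
    and "AE x in lebesgue. x \<in> - \<Sigma> \<longrightarrow> conv_indicator_measure \<Omega> \<mu> x = 0"
    and "t \<in> measure_support \<mu>"
  shows "emeasure lebesgue (((\<lambda>x. x + t) ` \<Omega>) \<inter> - \<Sigma>) = 0"
proof -
  note Om = assms(1) and bdd = assms(2) and smu = assms(3) and Sig = assms(5) and hyp = assms(6)
  have sp: "space \<mu> = UNIV" using smu by (metis sets_eq_imp_space_eq space_borel)
  interpret mu: sigma_finite_measure \<mu> using lf_sigma_finite assms(3,4) by blast
  interpret lb: sigma_finite_measure "lborel :: 'a measure" by (rule sigma_finite_lborel)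
  interpret pair_sigma_finite "lborel :: 'a measure" \<mu> ..
  define B where "B = main_part lborel \<Omega>"
  have Bb: "B \<in> sets borel" unfolding B_def using Om by (metis main_part_sets sets_lborel)
  have BO: "B \<subseteq> \<Omega>" unfolding B_def using Om by (metis Un_upper1 main_part_null_part_Un)
  obtain N1 where N1: "N1 \<in> null_sets lborel" "\<Omega> - B \<subseteq> N1"
  proof -
    obtain N where "N \<in> null_sets lborel" "null_part lborel \<Omega> \<subseteq> N" using null_part[OF Om] by blast
    moreover have "\<Omega> - B \<subseteq> null_part lborel \<Omega>" unfolding B_def using Om
      by (metis Diff_subset_conv main_part_null_part_Un sup_commute order_refl)
    ultimately show thesis using that by blast
  qed
  have cS: "- \<Sigma> \<in> sets lebesgue" using Sig by (simp add: Compl_in_sets_lebesgue)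
  define F where "F = main_part lborel (- \<Sigma>)"
  have Fb: "F \<in> sets borel" unfolding F_def using cS by (metis main_part_sets sets_lborel)
  have FS: "F \<subseteq> - \<Sigma>" unfolding F_def using cS by (metis Un_upper1 main_part_null_part_Un)
  obtain N2 where N2: "N2 \<in> null_sets lborel" "- \<Sigma> - F \<subseteq> N2"
  proof -
    obtain N where "N \<in> null_sets lborel" "null_part lborel (- \<Sigma>) \<subseteq> N" using null_part[OF cS] by blast
    moreover have "- \<Sigma> - F \<subseteq> null_part lborel (- \<Sigma>)" unfolding F_def using cS
      by (metis Diff_subset_conv main_part_null_part_Un sup_commute order_refl)
    ultimately show thesis using that by blast
  qed
  note [measurable] = Bb Fb
  define h where "h = (\<lambda>x y. indicator F x * indicator B (x - y) :: ennreal)"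
  have hm1: "case_prod h \<in> borel_measurable (lborel \<Otimes>\<^sub>M \<mu>)"
  proof -
    have e: "sets (lborel \<Otimes>\<^sub>M \<mu>) = sets (borel \<Otimes>\<^sub>M (borel :: 'a measure))"
      using smu by (intro sets_pair_measure_cong) auto
    have hb: "case_prod h \<in> borel_measurable (borel \<Otimes>\<^sub>M (borel :: 'a measure))"
      unfolding h_def by measurable
    show ?thesis using hb unfolding measurable_cong_sets[OF e refl] .
  qed
  have hm2: "(\<lambda>(y, x). h x y) \<in> borel_measurable (\<mu> \<Otimes>\<^sub>M lborel)"
  proof -
    have e: "sets (\<mu> \<Otimes>\<^sub>M lborel) = sets (borel \<Otimes>\<^sub>M (borel :: 'a measure))"
      using smu by (intro sets_pair_measure_cong) auto
    have hb: "(\<lambda>(y, x). h x y) \<in> borel_measurable (borel \<Otimes>\<^sub>M (borel :: 'a measure))"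
      unfolding h_def by measurable
    show ?thesis using hb unfolding measurable_cong_sets[OF e refl] .
  qed
  have conv_le: "conv_indicator_measure B \<mu> x \<le> conv_indicator_measure \<Omega> \<mu> x" for x
    unfolding conv_indicator_measure_def using BO
    by (intro nn_integral_mono) (auto simp: indicator_def)
  have "AE x in lborel. x \<in> - \<Sigma> \<longrightarrow> conv_indicator_measure \<Omega> \<mu> x = 0"
    using hyp by (simp add: AE_completion_iff)
  then have AE1: "AE x in lborel. (\<integral>\<^sup>+ y. h x y \<partial>\<mu>) = 0"
  proof eventually_elim
    case (elim x)
    have m0: "(\<lambda>y. indicator B (x - y) :: ennreal) \<in> borel_measurable borel" by measurable
    have m: "(\<lambda>y. indicator B (x - y) :: ennreal) \<in> borel_measurable \<mu>"
      using m0 unfolding measurable_cong_sets[OF smu refl] .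
    have "(\<integral>\<^sup>+ y. h x y \<partial>\<mu>) = indicator F x * conv_indicator_measure B \<mu> x"
      unfolding h_def conv_indicator_measure_def by (rule nn_integral_cmult[OF m])
    also have "\<dots> = 0"
    proof (cases "x \<in> F")
      case True
      then have "conv_indicator_measure \<Omega> \<mu> x = 0" using elim FS by blast
      then show ?thesis using conv_le[of x] by simp
    qed simp
    finally show ?case .
  qed
  have "(\<integral>\<^sup>+ x. (\<integral>\<^sup>+ y. h x y \<partial>\<mu>) \<partial>lborel) = 0"
  proof -
    have "(\<integral>\<^sup>+ x. (\<integral>\<^sup>+ y. h x y \<partial>\<mu>) \<partial>lborel) = (\<integral>\<^sup>+ x. 0 \<partial>(lborel :: 'a measure))"
      using AE1 by (rule nn_integral_cong_AE)
    then show ?thesis by simp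
  qed
  then have "(\<integral>\<^sup>+ y. (\<integral>\<^sup>+ x. h x y \<partial>lborel) \<partial>\<mu>) = 0"
    using Fubini'[OF hm1] by simp
  moreover have "(\<lambda>y. \<integral>\<^sup>+ x. h x y \<partial>lborel) \<in> borel_measurable \<mu>"
    using sigma_finite_measure.borel_measurable_nn_integral[OF sigma_finite_lborel, of "\<lambda>y x. h x y" \<mu>] hm2 by simp
  ultimately have AE2: "AE y in \<mu>. (\<integral>\<^sup>+ x. h x y \<partial>lborel) = 0"
    by (simp add: nn_integral_0_iff_AE)
  define G where "G = (\<lambda>y. emeasure lborel (F \<inter> {x. x - y \<in> B}))"
  have Gs: "F \<inter> {x. x - y \<in> B} \<in> sets borel" for y by measurable
  have hG: "(\<integral>\<^sup>+ x. h x y \<partial>lborel) = G y" for y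
  proof -
    have "(\<integral>\<^sup>+ x. h x y \<partial>lborel) = (\<integral>\<^sup>+ x. indicator (F \<inter> {x. x - y \<in> B}) x \<partial>lborel)"
      unfolding h_def by (intro nn_integral_cong) (auto simp: indicator_def)
    also have "\<dots> = G y" unfolding G_def using Gs[of y] by (intro nn_integral_indicator) simp
    finally show ?thesis .
  qed
  have AE3: "AE y in \<mu>. G y = 0" using AE2 by (simp add: hG)
  define A where "A = F \<inter> {x. x - t \<in> B}"
  have Gt: "G t = 0"
  proof (rule ccontr)
    assume "G t \<noteq> 0"
    then have Gpos: "G t > 0" by (simp add: zero_less_iff_neq_zero)
    have Ab: "A \<in> sets borel" unfolding A_def by (rule Gs)
    have eA: "emeasure lebesgue A = G t" unfolding G_def A_def using Gs[of t] by simp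
    have "A \<subseteq> (\<lambda>x. x + t) ` \<Omega>" unfolding A_def using BO by (force simp: image_iff algebra_simps)
    moreover have "bounded ((\<lambda>x. x + t) ` \<Omega>)" 
    proof -
      have "(\<lambda>x. x + t) ` \<Omega> = (\<lambda>x. t + x) ` \<Omega>" by (simp add: add.commute)
      then show ?thesis using bounded_translation[OF bdd, of t] by simp
    qed
    ultimately have Abdd: "bounded A" by (rule bounded_subset[rotated])
    obtain d where d: "d > 0" "\<And>h. norm h < d \<Longrightarrow> emeasure lebesgue (A \<inter> {x. x - h \<in> A}) > 0"
      using steinhaus[of A] Ab Abdd eA Gpos by auto
    have ballG: "G y \<noteq> 0" if y: "y \<in> ball t d" for y
    proof -
      have n: "norm (y - t) < d" using y by (simp add: dist_norm norm_minus_commute)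
      have sub: "A \<inter> {x. x - (y - t) \<in> A} \<subseteq> F \<inter> {x. x - y \<in> B}"
        unfolding A_def by (auto simp: algebra_simps)
      have "emeasure lebesgue (A \<inter> {x. x - (y - t) \<in> A}) \<le> emeasure lebesgue (F \<inter> {x. x - y \<in> B})"
        using sub Gs[of y] by (intro emeasure_mono) auto
      also have "\<dots> = G y" unfolding G_def using Gs[of y] by simp
      finally show ?thesis using d(2)[OF n] by auto
    qed
    from AE3 obtain N where N: "{y \<in> space \<mu>. \<not> G y = 0} \<subseteq> N" "emeasure \<mu> N = 0" "N \<in> sets \<mu>"
      by (rule AE_E)
    have "ball t d \<subseteq> N" using N(1) ballG sp by auto
    then have "emeasure \<mu> (ball t d) \<le> emeasure \<mu> N" using N(3) by (rule emeasure_mono)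
    then have "emeasure \<mu> (ball t d) = 0" using N(2) by simp
    moreover have "emeasure \<mu> (ball t d) > 0"
      using assms(7) d(1) unfolding measure_support_def by auto
    ultimately show False by simp
  qed
  have An: "A \<in> null_sets lborel" using Gt Gs[of t] unfolding G_def A_def by (simp add: null_sets_def)
  have N1t: "(\<lambda>x. x + t) ` N1 \<in> null_sets lborel"
  proof -
    have "(\<lambda>x. x + t) ` N1 = {x. x - t \<in> N1}" by force
    then show ?thesis using null_sets_translation[OF N1(1)] by simp
  qed
  have cover: "((\<lambda>x. x + t) ` \<Omega>) \<inter> - \<Sigma> \<subseteq> A \<union> (\<lambda>x. x + t) ` N1 \<union> N2"
  proof
    fix z assume z: "z \<in> ((\<lambda>x. x + t) ` \<Omega>) \<inter> - \<Sigma>"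
    then obtain w where w: "w \<in> \<Omega>" "z = w + t" by auto
    show "z \<in> A \<union> (\<lambda>x. x + t) ` N1 \<union> N2"
    proof (cases "w \<in> B")
      case False then show ?thesis using w N1(2) by auto
    next
      case True then show ?thesis using w z N2(2) unfolding A_def by auto
    qed
  qed
  have U: "A \<union> (\<lambda>x. x + t) ` N1 \<union> N2 \<in> null_sets lborel"
    using An N1t N2(1) by auto
  have "emeasure lebesgue (((\<lambda>x. x + t) ` \<Omega>) \<inter> - \<Sigma>) \<le> emeasure lebesgue (A \<union> (\<lambda>x. x + t) ` N1 \<union> N2)"
    using cover U by (intro emeasure_mono) auto
  also have "\<dots> = 0" using null_sets_completionI[OF U] by (rule null_setsD1)
  finally show ?thesis by simp
qed

end
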